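(* Fix an integer $r\ge1$ and let $F(x,y)=x^{2r+1}+y^{2r+1}+\sum_{j=1}^r c(r,j)x^{2r+1-2j}y^j$, where $c(r,j)=\frac{2r+1}{j}\binom{2r-j}{j-1}$. Let $H(x,y)=\sum_{j=1}^r\lambda_jx^{2r+1-2j}y^j$ with $0\le\lambda_j<c(r,j)$ for each $j$, and put $G=F-H+FH$. Then $N(G)=N(F)+N(FH)$.
   Context: $N(q)$ denotes the number of distinct monomials with nonzero coefficient in the polynomial $q$. *)

theory Defs
  imports "HOL-Computational_Algebra.Polynomial"
begin

text \<open>Bivariate real polynomials in x, y are represented as real poly poly:
  outer variable y, inner variable x.  The monomial x^a y^b with coefficient c
  is monom (monom c a) b.\<close>

definition bimonom :: "real \<Rightarrow> nat \<Rightarrow> nat \<Rightarrow> real poly poly" where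
  "bimonom c a b = monom (monom c a) b"

definition N :: "real poly poly \<Rightarrow> nat" where
  "N q = card {(i, j). coeff (coeff q j) i \<noteq> 0}"

definition cc :: "nat \<Rightarrow> nat \<Rightarrow> real" where
  "cc r j = (real (2*r+1) / real j) * real ((2*r - j) choose (j - 1))"

definition Fpoly :: "nat \<Rightarrow> real poly poly" where
  "Fpoly r = bimonom 1 (2*r+1) 0 + bimonom 1 0 (2*r+1)
     + (\<Sum>j=1..r. bimonom (cc r j) (2*r+1-2*j) j)"

definition Hpoly :: "nat \<Rightarrow> (nat \<Rightarrow> real) \<Rightarrow> real poly poly" where
  "Hpoly r lam = (\<Sum>j=1..r. bimonom (lam j) (2*r+1-2*j) j)"

end

theory Submission
  imports Defs
begin

definition cf :: "real poly poly \<Rightarrow> nat \<Rightarrow> nat \<Rightarrow> real" where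
  "cf q i j = coeff (coeff q j) i"

lemma supp_mult:
  assumes A: "\<And>i j. cf A i j \<noteq> 0 \<Longrightarrow> i \<ge> a1 \<and> i + 2*j \<ge> w1"
    and B: "\<And>i j. cf B i j \<noteq> 0 \<Longrightarrow> i \<ge> a2 \<and> i + 2*j \<ge> w2"
    and nz: "cf (A*B) i j \<noteq> 0"
  shows "i \<ge> a1 + a2 \<and> i + 2*j \<ge> w1 + w2"
proof -
  have "cf (A*B) i j = (\<Sum>j1\<le>j. \<Sum>i1\<le>i. cf A i1 j1 * cf B (i-i1) (j-j1))"
    unfolding cf_def by (simp add: coeff_mult coeff_sum)
  with nz obtain j1 where j1: "j1 \<le> j" and "(\<Sum>i1\<le>i. cf A i1 j1 * cf B (i-i1) (j-j1)) \<noteq> 0"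
    by (metis (no_types, lifting) atMost_iff sum.neutral)
  then obtain i1 where i1: "i1 \<le> i" and "cf A i1 j1 * cf B (i-i1) (j-j1) \<noteq> 0"
    by (metis (no_types, lifting) atMost_iff sum.neutral)
  then have "cf A i1 j1 \<noteq> 0" "cf B (i-i1) (j-j1) \<noteq> 0" by auto
  from A[OF this(1)] B[OF this(2)] i1 j1 show ?thesis by linarith
qed

lemma cf_add: "cf (p + q) i j = cf p i j + cf q i j" by (simp add: cf_def)
lemma cf_diff: "cf (p - q) i j = cf p i j - cf q i j" by (simp add: cf_def)
lemma cf_bimonom: "cf (bimonom c a b) i j = (if i = a \<and> j = b then c else 0)"
  by (simp add: cf_def bimonom_def coeff_monom)
lemma cf_sum: "cf (\<Sum>k\<in>S. f k) i j = (\<Sum>k\<in>S. cf (f k) i j)"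
  by (simp add: cf_def coeff_sum)

lemma sum_delta_aux:
  "(\<Sum>k=1..r. (if (i::nat) = 2*r+1-2*k \<and> j = k then g k else 0))
   = (if j \<in> {1..r} \<and> i = 2*r+1-2*j then g j else (0::real))"
proof -
  have "(\<Sum>k=1..r. (if i = 2*r+1-2*k \<and> j = k then g k else 0))
     = (\<Sum>k=1..r. (if j = k then (if i = 2*r+1-2*j then g j else 0) else 0))"
    by (rule sum.cong) auto
  also have "\<dots> = (if j \<in> {1..r} \<and> i = 2*r+1-2*j then g j else (0::real))"
    by (simp add: sum.delta)
  finally show ?thesis .
qed

lemma cfH: "cf (Hpoly r lam) i j = (if j \<in> {1..r} \<and> i = 2*r+1-2*j then lam j else 0)"
  unfolding Hpoly_def cf_sum cf_bimonom by (rule sum_delta_aux)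

lemma cfF: "cf (Fpoly r) i j = (if i = 2*r+1 \<and> j = 0 then 1 else 0)
   + (if i = 0 \<and> j = 2*r+1 then 1 else 0)
   + (if j \<in> {1..r} \<and> i = 2*r+1-2*j then cc r j else 0)"
  unfolding Fpoly_def cf_add cf_sum cf_bimonom sum_delta_aux by simp

lemma finite_supp: "finite {(i, j). cf q i j \<noteq> 0}"
proof -
  have "{(i, j). cf q i j \<noteq> 0} \<subseteq> {..Max (insert 0 ((\<lambda>j. degree (coeff q j)) ` {..degree q}))} \<times> {..degree q}"
  proof clarify
    fix i j assume h: "cf q i j \<noteq> 0"
    then have jd: "j \<le> degree q" unfolding cf_def by (metis coeff_0 le_degree)
    have "i \<le> degree (coeff q j)" using h unfolding cf_def using le_degree by blast
    also have "\<dots> \<le> Max (insert 0 ((\<lambda>j. degree (coeff q j)) ` {..degree q}))"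
      using jd by (intro Max_ge) auto
    finally show "i \<in> {..Max (insert 0 ((\<lambda>j. degree (coeff q j)) ` {..degree q}))} \<and> j \<in> {..degree q}"
      using jd by auto
  qed
  then show ?thesis by (rule finite_subset) auto
qed

lemma N_cf: "N q = card {(i, j). cf q i j \<noteq> 0}" by (simp add: N_def cf_def)

lemma cc_pos: "j \<in> {1..r} \<Longrightarrow> cc r j > 0"
  unfolding cc_def by (auto intro!: mult_pos_pos divide_pos_pos)

theorem proposition2p5:
  fixes r :: nat and lam :: "nat \<Rightarrow> real"
  assumes "r \<ge> 1"
    and "\<And>j. j \<in> {1..r} \<Longrightarrow> 0 \<le> lam j \<and> lam j < cc r j"
  shows "N (Fpoly r - Hpoly r lam + Fpoly r * Hpoly r lam)
         = N (Fpoly r) + N (Fpoly r * Hpoly r lam)"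
proof -
  define F where "F = Fpoly r"
  define H where "H = Hpoly r lam"
  have sF: "i \<ge> 0 \<and> i + 2*j \<ge> 2*r+1" if "cf F i j \<noteq> 0" for i j
    using that unfolding F_def cfF by (auto split: if_splits)
  have sH: "i \<ge> 1 \<and> i + 2*j \<ge> 2*r+1" if "cf H i j \<noteq> 0" for i j
    using that unfolding H_def cfH by (auto split: if_splits)
  have sB: "i \<ge> 1 \<and> i + 2*j \<ge> 4*r+2" if "cf (F*H) i j \<noteq> 0" for i j
    using supp_mult[OF sF sH that] by simp
  have sA: "cf (F - H) i j \<noteq> 0 \<longleftrightarrow> cf F i j \<noteq> 0" for i j
  proof (cases "j \<in> {1..r} \<and> i = 2*r+1-2*j")
    case True
    then show ?thesis using assms(2)[of j] unfolding cf_diff F_def H_def cfF cfH by auto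
  qed (unfold cf_diff F_def H_def cfF cfH, auto)
  have sA2: "i + 2*j = 2*r+1 \<or> (i = 0 \<and> j = 2*r+1)" if "cf F i j \<noteq> 0" for i j
    using that unfolding F_def cfF by (auto split: if_splits)
  have eq: "{(i, j). cf (F - H + F*H) i j \<noteq> 0} = {(i, j). cf F i j \<noteq> 0} \<union> {(i, j). cf (F*H) i j \<noteq> 0}"
  proof -
    have "cf (F - H + F*H) i j \<noteq> 0 \<longleftrightarrow> cf F i j \<noteq> 0 \<or> cf (F*H) i j \<noteq> 0" for i j
    proof (cases "cf (F*H) i j = 0")
      case True then show ?thesis using sA[of i j] by (simp add: cf_add)
    next
      case False
      then have "cf F i j = 0" using sB[of i j] sA2[of i j] assms(1) by auto
      moreover have "cf (F - H) i j = 0" using sA calculation by blast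
      ultimately show ?thesis using False by (simp add: cf_add)
    qed
    then show ?thesis by auto
  qed
  have disj: "{(i, j). cf F i j \<noteq> 0} \<inter> {(i, j). cf (F*H) i j \<noteq> 0} = {}"
    using sB sA2 assms(1) by fastforce
  show ?thesis unfolding N_cf F_def[symmetric] H_def[symmetric] eq
    by (rule card_Un_disjoint[OF finite_supp finite_supp disj])
qed

end
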